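(* Let $V_{th_1}>0$ (the first-level firing threshold) and $a>0$ (the width of the rectangular surrogate derivative, whose gradient-available interval is $[V_{th_1}-a/2,\,V_{th_1}+a/2]$). Let the value $x$ of a feature map entry normalized by tdBN satisfy $x \sim N(0,(V_{th_1})^2)$. Let $P$ and $P^*$ be the probabilities that a spike (of value $1$) arriving from the shortcut connection leads to a dormant unit in spiking ResNet and spiking DS-ResNet respectively, and let $I$ and $I^*$ be the identity-mapping abilities of spiking ResNet and spiking DS-ResNet respectively (all as defined in the context). Then $P^* < P$ and $I^* > I$.
   Context: Setting (single-level firing, $K=1$): a spiking neuron fires when its membrane potential reaches the threshold $V_{th_1}$; its spike derivative is approximated by $h(u)=\frac{1}{a}\mathbf{1}\{|u-V_{th_1}|<a/2\}$. A "dormant unit" is a neuron whose membrane potential lies to the right of the gradient-available interval, i.e. exceeds $V_{th_1}+a/2$, so that its surrogate derivative is zero. The residual-branch feature map value $x$ and the shortcut spike are treated as independent, and residual membrane potential from earlier timesteps is ignored. In spiking ResNet the activation is applied after adding the shortcut spike to the residual branch, so the pre-activation value is $1+x$ when a shortcut spike is present; in spiking DS-ResNet the activation is applied to the residual branch before the addition, so the pre-activation value is $x$. Accordingly, $P=\Pr(1+x>V_{th_1}+a/2)$ and $P^*=\Pr(x>V_{th_1}+a/2)$. Identity-mapping ability is measured as the probability that the block's output reflects whether a shortcut spike is present: for spiking ResNet the output (spike iff $\text{shortcut}+x\ge V_{th_1}$) depends on the shortcut spike exactly when $V_{th_1}-1<x<V_{th_1}$, so $I=\Pr(V_{th_1}-1<x<V_{th_1})$;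 for spiking DS-ResNet the shortcut spike is added directly to the output, so every input spike is mapped to the output and $I^*=1$. *)

theory Defs
  imports "HOL-Probability.Probability"
begin

definition P_resnet :: "'s measure \<Rightarrow> ('s \<Rightarrow> real) \<Rightarrow> real \<Rightarrow> real \<Rightarrow> real" where
  "P_resnet M X Vth a = measure M {w \<in> space M. 1 + X w > Vth + a / 2}"

definition P_dsresnet :: "'s measure \<Rightarrow> ('s \<Rightarrow> real) \<Rightarrow> real \<Rightarrow> real \<Rightarrow> real" where
  "P_dsresnet M X Vth a = measure M {w \<in> space M. X w > Vth + a / 2}"

definition I_resnet :: "'s measure \<Rightarrow> ('s \<Rightarrow> real) \<Rightarrow> real \<Rightarrow> real" where
  "I_resnet M X Vth = measure M {w \<in> space M. Vth - 1 < X w \<and> X w < Vth}"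

text \<open>Identity-mapping ability of spiking DS-ResNet: every input spike is mapped, so 1.\<close>
definition I_dsresnet :: real where
  "I_dsresnet = 1"

end

theory Submission
  imports Defs
begin

lemma pos_lemma:
  fixes M :: "'s measure" and X :: "'s \<Rightarrow> real" and s :: real and A :: "real set"
  assumes P: "prob_space M" and s: "s > 0"
    and D: "distributed M lborel X (\<lambda>x. ennreal (normal_density 0 s x))"
    and A: "A \<in> sets borel" and Apos: "emeasure lborel A > 0"
  shows "measure M (X -` A \<inter> space M) > 0"
proof -
  have Al: "A \<in> sets lborel" using A by simp
  have e: "emeasure M (X -` A \<inter> space M) = (\<integral>\<^sup>+x. ennreal (normal_density 0 s x) * indicator A x \<partial>lborel)"
    using distributed_emeasure[OF D Al] by simp
  have ne: "(\<integral>\<^sup>+x. ennreal (normal_density 0 s x) * indicator A x \<partial>lborel) \<noteq> 0"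
  proof
    assume "(\<integral>\<^sup>+x. ennreal (normal_density 0 s x) * indicator A x \<partial>lborel) = 0"
    then have "AE x in lborel. ennreal (normal_density 0 s x) * indicator A x = 0"
      using A by (subst (asm) nn_integral_0_iff_AE) auto
    then have "AE x in lborel. x \<notin> A"
    proof eventually_elim
      fix x assume h: "ennreal (normal_density 0 s x) * indicator A x = 0"
      have "normal_density 0 s x > 0" using normal_density_pos[OF s] by blast
      then show "x \<notin> A" using h by (auto simp: indicator_def)
    qed
    then have "A \<in> null_sets lborel" using AE_iff_null_sets[OF Al] by simp
    then show False using Apos by auto
  qed
  interpret prob_space M by fact
  have "emeasure M (X -` A \<inter> space M) \<noteq> 0" using e ne by simp
  then show ?thesis
    by (simp add: emeasure_eq_measure zero_less_measure_iff)
qed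

theorem theorem1:
  fixes M :: "'s measure" and X :: "'s \<Rightarrow> real" and Vth a :: real
  assumes "prob_space M"
    and "Vth > 0" and "a > 0"
    and "distributed M lborel X (normal_density 0 Vth)"
  shows "P_dsresnet M X Vth a < P_resnet M X Vth a \<and> I_dsresnet > I_resnet M X Vth"
proof -
  interpret prob_space M by fact
  have D: "distributed M lborel X (\<lambda>x. ennreal (normal_density 0 Vth x))" using assms(4) by simp
  have Xm: "X \<in> borel_measurable M" using distributed_measurable[OF D] by simp
  define c where "c = Vth + a / 2"
  have s1: "{w \<in> space M. X w > c} = X -` {c<..} \<inter> space M" by auto
  have s2: "{w \<in> space M. 1 + X w > c} = X -` {c-1<..} \<inter> space M" by auto
  have s3: "X -` {c-1<..c} \<inter> space M = (X -` {c-1<..} \<inter> space M) - (X -` {c<..} \<inter> space M)" by auto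
  have m1: "X -` {c<..} \<inter> space M \<in> sets M" using Xm by measurable
  have m2: "X -` {c-1<..} \<inter> space M \<in> sets M" using Xm by measurable
  have pos1: "measure M (X -` {c-1<..c} \<inter> space M) > 0"
    by (rule pos_lemma[OF assms(1) assms(2) D]) auto
  have "measure M (X -` {c-1<..c} \<inter> space M) = measure M (X -` {c-1<..} \<inter> space M) - measure M (X -` {c<..} \<inter> space M)"
    unfolding s3 by (rule finite_measure_Diff[OF m2 m1]) auto
  with pos1 have part1: "P_dsresnet M X Vth a < P_resnet M X Vth a"
    unfolding P_dsresnet_def P_resnet_def c_def[symmetric] s1 s2 by simp
  have s4: "{w \<in> space M. Vth - 1 < X w \<and> X w < Vth} = X -` {Vth-1<..<Vth} \<inter> space M" by auto
  have s5: "X -` {Vth..Vth+1} \<inter> space M \<subseteq> space M - (X -` {Vth-1<..<Vth} \<inter> space M)" by auto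
  have m4: "X -` {Vth-1<..<Vth} \<inter> space M \<in> sets M" using Xm by measurable
  have m5: "X -` {Vth..Vth+1} \<inter> space M \<in> sets M" using Xm by measurable
  have pos2: "measure M (X -` {Vth..Vth+1} \<inter> space M) > 0"
    by (rule pos_lemma[OF assms(1) assms(2) D]) auto
  have "measure M (X -` {Vth..Vth+1} \<inter> space M) \<le> measure M (space M - (X -` {Vth-1<..<Vth} \<inter> space M))"
    using s5 m4 by (intro finite_measure_mono) auto
  also have "\<dots> = 1 - measure M (X -` {Vth-1<..<Vth} \<inter> space M)"
    using m4 by (simp add: prob_compl)
  finally have part2: "I_dsresnet > I_resnet M X Vth"
    using pos2 unfolding I_dsresnet_def I_resnet_def s4 by simp
  show ?thesis using part1 part2 by simp
qed

end
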